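(* Let $n,d\in\mathbb{N}$, $p\ge1$, $\Omega\subseteq\mathbb{R}^d$ compact, $z\in\mathbb{R}^d\setminus\Omega$. Let $a$ be uniform on $S^{d-1}$ and $b$ uniform on $S^{n-1}$, independently. For $X\in\mathcal{S}_{\le n}(\Omega)$ define $$S_z(X;a,b)=b\cdot\mathrm{sort}\big(a\cdot\rho_{(z)}(X)\big)\in\mathbb{R},$$ where $a\cdot\rho_{(z)}(X)\in\mathbb{R}^n$ is the vector of inner products of $a$ with the $n$ elements of $\rho_{(z)}(X)$ and $\mathrm{sort}$ sorts its entries in nondecreasing order. Then, with the metric $W_1^z$ on inputs and the absolute value on outputs, $S_z$ is uniformly Lipschitz and lower Lipschitz in expectation.
   Context: $\mathcal{S}_{\le n}(\Omega)$ is the set of multisets with at most $n$ elements from $\Omega$; $\rho_{(z)}$ pads a multiset with copies of $z$ to exactly $n$ elements; $W_1(\{\!\!\{ x_j\}\!\!\},\{\!\!\{ y_j\}\!\!\})=\min_{\tau\in S_n}\sum_j\|x_j-y_{\tau(j)}\|_1$ for $n$-element multisets and $W_1^z(S_1,S_2)=W_1(\rho_{(z)}(S_1),\rho_{(z)}(S_2))$. A parametric function $f(x;w)$ is uniformly Lipschitz if there is $L$ with $x\mapsto f(x;w)$ $L$-Lipschitz for all $w$; it is lower Lipschitz in expectation (for the given $p$) if there is $c>0$ with $c^p\le \mathbb{E}_{w}\left[\left(\frac{d_Y(f(x;w),f(x';w))}{d_X(x,x')}\right)^p\right]$ for all $x,x'$ with $d_X(x,x')>0$. *)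

theory Defs
  imports "HOL-Analysis.Analysis" "HOL-Library.Multiset"
begin

text \<open>Inputs live in R^d, modelled as the type real^'d (d = CARD('d)).
  The n-dimensional vectors b are modelled as functions nat => real on the index
  set {..<n} (extensional elements of PiE {..<n} UNIV).\<close>

definition l1norm :: "real ^ 'd \<Rightarrow> real" where
  "l1norm x = (\<Sum>i\<in>UNIV. \<bar>x $ i\<bar>)"

definition multisets_le :: "nat \<Rightarrow> 'a set \<Rightarrow> 'a multiset set" where
  "multisets_le n \<Omega> = {X. size X \<le> n \<and> set_mset X \<subseteq> \<Omega>}"

text \<open>Padding rho_(z): add copies of z until exactly n elements.\<close>
definition pad :: "'a \<Rightarrow> nat \<Rightarrow> 'a multiset \<Rightarrow> 'a multiset" where
  "pad z n X = X + replicate_mset (n - size X) z"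

text \<open>Wasserstein-1 distance for two n-element multisets (l1 ground metric):
  minimum over all matchings, i.e. over all enumerations xs, ys of the two multisets
  of sum_j ||xs_j - ys_j||_1 (equivalently min over permutations tau).\<close>
definition W1 :: "(real ^ 'd) multiset \<Rightarrow> (real ^ 'd) multiset \<Rightarrow> real" where
  "W1 A B = Min {(\<Sum>j<length xs. l1norm (xs ! j - ys ! j)) | xs ys.
                  mset xs = A \<and> mset ys = B}"

definition W1z :: "real ^ 'd \<Rightarrow> nat \<Rightarrow> (real ^ 'd) multiset \<Rightarrow> (real ^ 'd) multiset \<Rightarrow> real" where
  "W1z z n S1 S2 = W1 (pad z n S1) (pad z n S2)"

definition Sz :: "real ^ 'd \<Rightarrow> nat \<Rightarrow> (real ^ 'd) multiset \<Rightarrow> real ^ 'd \<Rightarrow> (nat \<Rightarrow> real) \<Rightarrow> real" where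
  "Sz z n X a b =
     (\<Sum>i<n. b i * sorted_list_of_multiset (image_mset (\<lambda>x. inner a x) (pad z n X)) ! i)"

definition unif_sphere :: "'a::euclidean_space measure" where
  "unif_sphere = distr (uniform_measure lborel (ball 0 1)) borel (\<lambda>x. x /\<^sub>R norm x)"

definition lebesgue_n :: "nat \<Rightarrow> (nat \<Rightarrow> real) measure" where
  "lebesgue_n n = PiM {..<n} (\<lambda>_. lborel)"

definition eucl_norm_n :: "nat \<Rightarrow> (nat \<Rightarrow> real) \<Rightarrow> real" where
  "eucl_norm_n n x = sqrt (\<Sum>i<n. (x i)\<^sup>2)"

definition unif_sphere_n :: "nat \<Rightarrow> (nat \<Rightarrow> real) measure" where
  "unif_sphere_n n =
     distr (uniform_measure (lebesgue_n n) {x \<in> space (lebesgue_n n). eucl_norm_n n x < 1})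
           (PiM {..<n} (\<lambda>_. borel))
           (\<lambda>x. restrict (\<lambda>i. x i / eucl_norm_n n x) {..<n})"

definition sphere_n :: "nat \<Rightarrow> (nat \<Rightarrow> real) set" where
  "sphere_n n = {b \<in> PiE {..<n} (\<lambda>_. UNIV). eucl_norm_n n b = 1}"

end

theory Submission
  imports Defs "HOL-Probability.Probability_Measure"
begin


lemma sorted_lom_cons:
  fixes x :: "'a::linorder"
  assumes "\<forall>y\<in>#M. x \<le> y"
  shows "sorted_list_of_multiset (add_mset x M) = x # sorted_list_of_multiset M"
proof -
  obtain xs where M: "M = mset xs" by (metis ex_mset)
  have "sorted_list_of_multiset (add_mset x M) = sort (x # xs)" using M
    by (metis mset.simps(2) sorted_list_of_multiset_mset)
  also have "\<dots> = insort x (sort xs)" by simp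
  also have "\<dots> = x # sort xs" using assms M by (intro insort_is_Cons) auto
  finally show ?thesis using M by simp
qed

definition lhsP :: "(real \<times> real) multiset \<Rightarrow> real" where
  "lhsP P = sum_list (map (\<lambda>(u,v). \<bar>u-v\<bar>) (zip (sorted_list_of_multiset (image_mset fst P))
       (sorted_list_of_multiset (image_mset snd P))))"

definition costP :: "(real \<times> real) multiset \<Rightarrow> real" where
  "costP P = sum_mset (image_mset (\<lambda>(x,y). \<bar>x-y\<bar>) P)"

lemma lhsP_le_costP: "lhsP P \<le> costP P"
proof (induction "size P" arbitrary: P rule: less_induct)
  case less
  show ?case
  proof (cases "P = {#}")
    case True then show ?thesis by (simp add: lhsP_def costP_def)
  next
    case False
    define x0 where "x0 = Min (fst ` set_mset P)"
    define y0 where "y0 = Min (snd ` set_mset P)"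
    have fin: "finite (fst ` set_mset P)" "finite (snd ` set_mset P)" by auto
    have ne: "fst ` set_mset P \<noteq> {}" "snd ` set_mset P \<noteq> {}" using False by auto
    have "x0 \<in> fst ` set_mset P" unfolding x0_def using fin ne by (intro Min_in) auto
    then obtain y1 where q1: "(x0,y1) \<in># P" by force
    have "y0 \<in> snd ` set_mset P" unfolding y0_def using fin ne by (intro Min_in) auto
    then obtain x2 where q2: "(x2,y0) \<in># P" by force
    have x0min: "\<And>p. p \<in># P \<Longrightarrow> x0 \<le> fst p" unfolding x0_def using fin by auto
    have y0min: "\<And>p. p \<in># P \<Longrightarrow> y0 \<le> snd p" unfolding y0_def using fin by auto
    obtain R where PR: "image_mset fst P = add_mset x0 (image_mset fst R)"
      "image_mset snd P = add_mset y0 (image_mset snd R)"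
      and cR: "\<bar>x0 - y0\<bar> + costP R \<le> costP P" and sR: "size R < size P"
      and Rmin: "\<And>p. p \<in># R \<Longrightarrow> x0 \<le> fst p \<and> y0 \<le> snd p"
    proof (cases "(x0,y1) = (x2,y0)")
      case True
      define R where "R = P - {#(x0,y0)#}"
      have P: "P = add_mset (x0,y0) R" unfolding R_def using q1 True by auto
      show ?thesis
        apply (rule that[of R])
        using P x0min y0min by (auto simp: costP_def)
    next
      case neq: False
      define R where "R = add_mset (x2,y1) (P - {#(x0,y1)#} - {#(x2,y0)#})"
      define R0 where "R0 = P - {#(x0,y1)#} - {#(x2,y0)#}"
      have q2': "(x2,y0) \<in># P - {#(x0,y1)#}" using q2 neq by (auto simp: in_diff_count)
      have P: "P = add_mset (x0,y1) (add_mset (x2,y0) R0)" unfolding R0_def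
        using q1 q2' by (metis insert_DiffM)
      have R: "R = add_mset (x2,y1) R0" unfolding R_def R0_def by simp
      have ineq: "\<bar>x0 - y0\<bar> + \<bar>x2 - y1\<bar> \<le> \<bar>x0 - y1\<bar> + \<bar>x2 - y0\<bar>"
        using x0min[OF q2] y0min[OF q1] by auto
      show ?thesis
        apply (rule that[of R])
        using P R ineq x0min[OF q2] y0min[OF q1] x0min y0min by (auto simp: costP_def)
    qed
    have "lhsP P = \<bar>x0 - y0\<bar> + lhsP R"
      unfolding lhsP_def PR using Rmin
      by (subst sorted_lom_cons, force)+ simp
    also have "\<dots> \<le> \<bar>x0 - y0\<bar> + costP R" using less sR by simp
    also have "\<dots> \<le> costP P" by (rule cR)
    finally show ?thesis .
  qed
qed

lemma sort_l1:
  fixes us vs :: "real list" assumes "length us = length vs"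
  shows "(\<Sum>i<length us. \<bar>sort us ! i - sort vs ! i\<bar>) \<le> (\<Sum>i<length us. \<bar>us!i - vs!i\<bar>)"
proof -
  define P where "P = mset (zip us vs)"
  have f: "image_mset fst P = mset us" "image_mset snd P = mset vs"
    unfolding P_def using assms by (simp_all flip: mset_map)
  have "lhsP P = (\<Sum>i<length us. \<bar>sort us ! i - sort vs ! i\<bar>)"
    unfolding lhsP_def f using assms
    by (simp add: sum_list_sum_nth atLeast0LessThan)
  moreover have "costP P = (\<Sum>i<length us. \<bar>us!i - vs!i\<bar>)"
    unfolding costP_def P_def using assms
    by (simp add: sum_mset_sum_list sum_list_sum_nth atLeast0LessThan flip: mset_map)
  ultimately show ?thesis using lhsP_le_costP by metis
qed


lemma size_pad: "size X \<le> n \<Longrightarrow> size (pad z n X) = n"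
  by (simp add: pad_def)

definition W1set :: "(real ^ 'd) multiset \<Rightarrow> (real ^ 'd) multiset \<Rightarrow> real set" where
  "W1set A B = {(\<Sum>j<length xs. l1norm (xs ! j - ys ! j)) | xs ys. mset xs = A \<and> mset ys = B}"

lemma W1set_finite: "finite (W1set A B)"
proof -
  have "W1set A B \<subseteq> (\<lambda>(xs,ys). \<Sum>j<length xs. l1norm (xs ! j - ys ! j)) `
     ({xs. set xs \<subseteq> set_mset A \<and> length xs = size A} \<times> {ys. set ys \<subseteq> set_mset B \<and> length ys = size B})"
    unfolding W1set_def by (force simp: image_iff)
  moreover have "finite ({xs. set xs \<subseteq> set_mset A \<and> length xs = size A} \<times> {ys. set ys \<subseteq> set_mset B \<and> length ys = size B})"
    by (intro finite_cartesian_product finite_lists_length_eq) auto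
  ultimately show ?thesis by (meson finite_imageI finite_subset)
qed

lemma W1set_ne: "W1set A B \<noteq> {}"
proof -
  obtain xs ys where "mset xs = A" "mset ys = B" by (metis ex_mset)
  then show ?thesis unfolding W1set_def by blast
qed

lemma W1_le: "mset xs = A \<Longrightarrow> mset ys = B \<Longrightarrow> W1 A B \<le> (\<Sum>j<length xs. l1norm (xs ! j - ys ! j))"
  unfolding W1_def by (rule Min_le[OF W1set_finite[unfolded W1set_def]]) blast

lemma W1_attained: "\<exists>xs ys. mset xs = A \<and> mset ys = B \<and> W1 A B = (\<Sum>j<length xs. l1norm (xs ! j - ys ! j))"
proof -
  have "W1 A B \<in> W1set A B" unfolding W1_def W1set_def[symmetric]
    using W1set_finite W1set_ne by (rule Min_in)
  then show ?thesis unfolding W1set_def by blast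
qed

lemma sort_enum:
  fixes f :: "'a \<Rightarrow> real"
  shows "\<exists>xs. mset xs = P \<and> sorted_list_of_multiset (image_mset f P) = map f xs"
proof -
  obtain ys where P: "P = mset ys" by (metis ex_mset)
  define xs where "xs = sort_key f ys"
  have "mset xs = P" unfolding xs_def P by simp
  moreover have "sort (map f ys) = map f xs"
  proof (rule properties_for_sort)
    show "mset (map f xs) = mset (map f ys)" unfolding xs_def
      by (metis mset_map mset_sort)
  qed (simp add: xs_def)
  ultimately show ?thesis using P by (metis mset_map sorted_list_of_multiset_mset)
qed

lemma Sz_enum:
  assumes "mset xs = pad z n X" "mset ys = pad z n X'" "size X \<le> n" "size X' \<le> n"
  shows "Sz z n X a b - Sz z n X' a b =
     (\<Sum>i<n. b i * (sort (map (inner a) xs) ! i - sort (map (inner a) ys) ! i))"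
  unfolding Sz_def assms(1,2)[symmetric]
  by (simp add: sum_subtractf right_diff_distrib flip: mset_map)

lemma l1norm_ge_norm: "norm x \<le> l1norm x"
  unfolding l1norm_def by (rule norm_le_l1_cart)

lemma comp_le_eucl: "i < n \<Longrightarrow> \<bar>x i\<bar> \<le> eucl_norm_n n x"
proof -
  assume i: "i < n"
  have "(x i)\<^sup>2 \<le> (\<Sum>j<n. (x j)\<^sup>2)" using i by (intro member_le_sum) auto
  then have "sqrt ((x i)\<^sup>2) \<le> sqrt (\<Sum>j<n. (x j)\<^sup>2)" by (rule real_sqrt_le_mono)
  then show ?thesis by (simp add: eucl_norm_n_def)
qed

lemma upper_part:
  assumes "a \<in> sphere 0 1" "b \<in> sphere_n n" "X \<in> multisets_le n \<Omega>" "X' \<in> multisets_le n \<Omega>"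
  shows "\<bar>Sz z n X a b - Sz z n X' a b\<bar> \<le> 1 * W1z z n X X'"
proof -
  have sX: "size X \<le> n" "size X' \<le> n" using assms(3,4) by (auto simp: multisets_le_def)
  obtain xs ys where e: "mset xs = pad z n X" "mset ys = pad z n X'"
    and W: "W1z z n X X' = (\<Sum>j<length xs. l1norm (xs ! j - ys ! j))"
    unfolding W1z_def using W1_attained by blast
  have lxs: "length xs = n" "length ys = n" using e sX
    by (metis size_mset size_pad)+
  have bi: "\<bar>b i\<bar> \<le> 1" if "i < n" for i
    using comp_le_eucl[OF that, of b] assms(2) by (simp add: sphere_n_def)
  define d where "d i = sort (map (inner a) xs) ! i - sort (map (inner a) ys) ! i" for i
  have "\<bar>Sz z n X a b - Sz z n X' a b\<bar> = \<bar>\<Sum>i<n. b i * d i\<bar>"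
    using Sz_enum[OF e sX] by (simp add: d_def)
  also have "\<dots> \<le> (\<Sum>i<n. \<bar>b i * d i\<bar>)" by (rule sum_abs)
  also have "\<dots> \<le> (\<Sum>i<n. \<bar>d i\<bar>)"
    by (intro sum_mono) (auto simp: abs_mult intro!: mult_left_le_one_le bi)
  also have "\<dots> \<le> (\<Sum>i<n. \<bar>map (inner a) xs ! i - map (inner a) ys ! i\<bar>)"
    using sort_l1[of "map (inner a) xs" "map (inner a) ys"] lxs by (simp add: d_def)
  also have "\<dots> \<le> (\<Sum>i<n. l1norm (xs ! i - ys ! i))"
  proof (intro sum_mono)
    fix i assume "i \<in> {..<n}"
    then have "\<bar>map (inner a) xs ! i - map (inner a) ys ! i\<bar> = \<bar>inner a (xs!i - ys!i)\<bar>"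
      using lxs by (simp add: inner_diff_right)
    also have "\<dots> \<le> norm a * norm (xs!i - ys!i)" by (rule Cauchy_Schwarz_ineq2)
    also have "\<dots> \<le> l1norm (xs ! i - ys ! i)" using assms(1) l1norm_ge_norm by simp
    finally show "\<bar>map (inner a) xs ! i - map (inner a) ys ! i\<bar> \<le> l1norm (xs ! i - ys ! i)" .
  qed
  also have "\<dots> = W1z z n X X'" using W lxs by simp
  finally show ?thesis by simp
qed


lemma interval_meas:
  fixes c e s :: real assumes "e \<noteq> 0" "s \<ge> 0"
  shows "emeasure lborel {y. \<bar>c + e * y\<bar> < s} \<le> ennreal (2 * s / \<bar>e\<bar>)"
proof -
  have "{y. \<bar>c + e * y\<bar> < s} \<subseteq> {(-c/e) - s/\<bar>e\<bar> <..< (-c/e) + s/\<bar>e\<bar>}"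
  proof
    fix y assume "y \<in> {y. \<bar>c + e * y\<bar> < s}"
    then have "\<bar>e\<bar> * \<bar>y - (-c/e)\<bar> < s" using assms
      by (simp add: abs_mult[symmetric] algebra_simps)
    then have "\<bar>y - (-c/e)\<bar> < s / \<bar>e\<bar>" using assms
      by (simp add: field_simps)
    then show "y \<in> {(-c/e) - s/\<bar>e\<bar> <..< (-c/e) + s/\<bar>e\<bar>}" by auto
  qed
  then have "emeasure lborel {y. \<bar>c + e * y\<bar> < s} \<le> emeasure lborel {(-c/e) - s/\<bar>e\<bar> <..< (-c/e) + s/\<bar>e\<bar>}"
    by (intro emeasure_mono) auto
  also have "\<dots> = ennreal (2 * s / \<bar>e\<bar>)" using assms by simp
  finally show ?thesis .
qed

lemma slab_PiM:
  fixes I :: "'i set" and e :: "'i \<Rightarrow> real"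
  assumes "finite I" "k \<in> I" "e k \<noteq> 0" "s \<ge> 0"
  shows "emeasure (PiM I (\<lambda>_. lborel::real measure))
     {x \<in> space (PiM I (\<lambda>_. lborel::real measure)). (\<forall>i\<in>I. \<bar>x i\<bar> \<le> 1) \<and> \<bar>\<Sum>i\<in>I. e i * x i\<bar> < s}
     \<le> ennreal (2 ^ card I * s / \<bar>e k\<bar>)"
proof -
  interpret P: product_sigma_finite "\<lambda>_::'i. lborel::real measure"
    by unfold_locales
  define J where "J = I - {k}"
  have I: "I = insert k J" "k \<notin> J" "finite J" using assms unfolding J_def by auto
  define S where "S = {x \<in> space (PiM I (\<lambda>_. lborel::real measure)). (\<forall>i\<in>I. \<bar>x i\<bar> \<le> 1) \<and> \<bar>\<Sum>i\<in>I. e i * x i\<bar> < s}"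
  define C where "C = PiE J (\<lambda>_. {-1..1::real})"
  have Smeas: "S \<in> sets (PiM I (\<lambda>_. lborel::real measure))" unfolding S_def using assms(1) by measurable
  have Cmeas: "C \<in> sets (PiM J (\<lambda>_. lborel::real measure))" unfolding C_def by (auto intro!: sets_PiM_I_finite I)
  have "emeasure (PiM I (\<lambda>_. lborel::real measure)) S = (\<integral>\<^sup>+x. indicator S x \<partial>PiM I (\<lambda>_. lborel::real measure))"
    using Smeas by simp
  also have "\<dots> = (\<integral>\<^sup>+ x. (\<integral>\<^sup>+ y. indicator S (x(k := y)) \<partial>lborel) \<partial>PiM J (\<lambda>_. lborel::real measure))"
    unfolding I(1) by (rule P.product_nn_integral_insert) (use I Smeas in auto)
  also have "\<dots> \<le> (\<integral>\<^sup>+ x. ennreal (2 * s / \<bar>e k\<bar>) * indicator C x \<partial>PiM J (\<lambda>_. lborel::real measure))"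
  proof (intro nn_integral_mono)
    fix x assume x: "x \<in> space (PiM J (\<lambda>_. lborel::real measure))"
    define c where "c = (\<Sum>i\<in>J. e i * x i)"
    show "(\<integral>\<^sup>+ y. indicator S (x(k := y)) \<partial>lborel) \<le> ennreal (2 * s / \<bar>e k\<bar>) * indicator C x"
    proof (cases "x \<in> C")
      case False
      have "indicator S (x(k := y)) = (0::ennreal)" for y
      proof -
        have "x(k:=y) \<notin> S"
        proof
          assume "x(k:=y) \<in> S"
          then have "\<forall>i\<in>J. \<bar>x i\<bar> \<le> 1" unfolding S_def I using I(2) by (auto split: if_splits)
          then have "x \<in> C" using x unfolding C_def by (auto simp: space_PiM PiE_iff)
          then show False using False by simp
        qed
        then show ?thesis by simp
      qed
      then show ?thesis using False by simp
    next
      case True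
      have "(\<integral>\<^sup>+ y. indicator S (x(k := y)) \<partial>lborel) \<le> (\<integral>\<^sup>+ y. indicator {y. \<bar>c + e k * y\<bar> < s} y \<partial>lborel)"
      proof (intro nn_integral_mono)
        fix y
        have "x(k:=y) \<in> S \<Longrightarrow> \<bar>c + e k * y\<bar> < s"
        proof -
          assume "x(k:=y) \<in> S"
          then have "\<bar>\<Sum>i\<in>I. e i * (x(k:=y)) i\<bar> < s" unfolding S_def by auto
          moreover have "(\<Sum>i\<in>I. e i * (x(k:=y)) i) = e k * y + (\<Sum>i\<in>J. e i * (x(k:=y)) i)"
            unfolding I(1) using I by (simp add: sum.insert)
          moreover have "(\<Sum>i\<in>J. e i * (x(k:=y)) i) = c"
            unfolding c_def using I(2) by (intro sum.cong) auto
          ultimately show ?thesis by (simp add: add.commute)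
        qed
        then show "indicator S (x(k := y)) \<le> (indicator {y. \<bar>c + e k * y\<bar> < s} y :: ennreal)"
          by (auto simp: indicator_def)
      qed
      also have "\<dots> = emeasure lborel {y. \<bar>c + e k * y\<bar> < s}"
        by (intro nn_integral_indicator) measurable
      also have "\<dots> \<le> ennreal (2 * s / \<bar>e k\<bar>)" using assms by (intro interval_meas) auto
      finally show ?thesis using True by simp
    qed
  qed
  also have "\<dots> = ennreal (2 * s / \<bar>e k\<bar>) * emeasure (PiM J (\<lambda>_. lborel::real measure)) C"
    using Cmeas by (rule nn_integral_cmult_indicator)
  also have "emeasure (PiM J (\<lambda>_. lborel::real measure)) C = (\<Prod>i\<in>J. emeasure lborel {-1..1::real})"
    unfolding C_def using I by (intro P.emeasure_PiM) auto
  also have "\<dots> = ennreal (2 ^ card J)" by (simp add: ennreal_power[symmetric])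
  also have "ennreal (2 * s / \<bar>e k\<bar>) * ennreal (2 ^ card J) = ennreal (2 ^ card I * s / \<bar>e k\<bar>)"
    using I assms by (simp add: ennreal_mult'[symmetric] card_insert_if)
  finally show ?thesis unfolding S_def .
qed


lemma exists_big_comp:
  fixes e :: "'a::euclidean_space" assumes "e \<noteq> 0"
  shows "\<exists>k\<in>Basis. norm e \<le> real DIM('a) * \<bar>inner e k\<bar>"
proof (rule ccontr)
  assume "\<not> ?thesis"
  then have "\<And>k. k \<in> Basis \<Longrightarrow> \<bar>inner e k\<bar> < norm e / real DIM('a)"
    by (auto simp: field_simps)
  then have "(\<Sum>b\<in>Basis. \<bar>inner e b\<bar>) < (\<Sum>b\<in>(Basis::'a set). norm e / real DIM('a))"
    by (intro sum_strict_mono) auto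
  also have "\<dots> = norm e" by simp
  finally show False using norm_le_l1[of e] by simp
qed

lemma ball_slab:
  fixes e :: "'a::euclidean_space" assumes "e \<noteq> 0" "s \<ge> 0"
  shows "emeasure lborel {x::'a. norm x < 1 \<and> \<bar>inner x e\<bar> < s}
     \<le> ennreal (2 ^ DIM('a) * s * DIM('a) / norm e)"
proof -
  obtain k where k: "k \<in> Basis" "norm e \<le> real DIM('a) * \<bar>inner e k\<bar>"
    using exists_big_comp[OF assms(1)] by blast
  have ek: "inner e k \<noteq> 0" using k assms by auto
  define M where "M = (\<Pi>\<^sub>M b\<in>(Basis::'a set). (lborel::real measure))"
  have "emeasure lborel {x::'a. norm x < 1 \<and> \<bar>inner x e\<bar> < s}
      = emeasure (distr M borel (\<lambda>f. \<Sum>b\<in>Basis. f b *\<^sub>R b)) {x::'a. norm x < 1 \<and> \<bar>inner x e\<bar> < s}"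
    unfolding M_def by (subst lborel_eq) simp
  also have "\<dots> = emeasure M ((\<lambda>f. \<Sum>b\<in>Basis. f b *\<^sub>R b) -` {x::'a. norm x < 1 \<and> \<bar>inner x e\<bar> < s} \<inter> space M)"
    unfolding M_def by (subst emeasure_distr) auto
  also have "\<dots> \<le> emeasure M {f \<in> space M. (\<forall>i\<in>Basis. \<bar>f i\<bar> \<le> 1) \<and> \<bar>\<Sum>i\<in>Basis. inner i e * f i\<bar> < s}"
  proof (rule emeasure_mono)
    show "{f \<in> space M. (\<forall>i\<in>Basis. \<bar>f i\<bar> \<le> 1) \<and> \<bar>\<Sum>i\<in>Basis. inner i e * f i\<bar> < s} \<in> sets M"
      unfolding M_def by measurable
    show "(\<lambda>f. \<Sum>b\<in>Basis. f b *\<^sub>R b) -` {x::'a. norm x < 1 \<and> \<bar>inner x e\<bar> < s} \<inter> space M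
      \<subseteq> {f \<in> space M. (\<forall>i\<in>Basis. \<bar>f i\<bar> \<le> 1) \<and> \<bar>\<Sum>i\<in>Basis. inner i e * f i\<bar> < s}"
    proof safe
      fix f i assume f: "norm (\<Sum>b\<in>Basis. f b *\<^sub>R b :: 'a) < 1" and i: "i \<in> (Basis::'a set)"
      have "inner (\<Sum>b\<in>Basis. f b *\<^sub>R b :: 'a) i = f i"
        using i by (simp add: inner_sum_left inner_Basis if_distrib cong: if_cong)
      moreover have "\<bar>inner (\<Sum>b\<in>Basis. f b *\<^sub>R b :: 'a) i\<bar> \<le> norm (\<Sum>b\<in>Basis. f b *\<^sub>R b :: 'a)"
        using Basis_le_norm[OF i] by simp
      ultimately show "\<bar>f i\<bar> \<le> 1" using f by simp
    next
      fix f assume "\<bar>inner (\<Sum>b\<in>Basis. f b *\<^sub>R b :: 'a) e\<bar> < s"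
      moreover have "inner (\<Sum>b\<in>Basis. f b *\<^sub>R b :: 'a) e = (\<Sum>i\<in>Basis. inner i e * f i)"
        by (simp add: inner_sum_left mult.commute)
      ultimately show "\<bar>\<Sum>i\<in>Basis. inner i e * f i\<bar> < s" by simp
    qed
  qed
  also have "\<dots> \<le> ennreal (2 ^ card (Basis::'a set) * s / \<bar>inner k e\<bar>)"
    unfolding M_def using k ek assms by (intro slab_PiM) (auto simp: inner_commute)
  also have "\<dots> \<le> ennreal (2 ^ DIM('a) * s * DIM('a) / norm e)"
  proof (intro ennreal_leI)
    have "s / \<bar>inner k e\<bar> \<le> s * DIM('a) / norm e"
      using k ek assms by (simp add: field_simps inner_commute mult_left_mono)
    then have "2 ^ DIM('a) * (s / \<bar>inner k e\<bar>) \<le> 2 ^ DIM('a) * (s * DIM('a) / norm e)"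
      by (intro mult_left_mono) auto
    then show "2 ^ card (Basis::'a set) * s / \<bar>inner k e\<bar> \<le> 2 ^ DIM('a) * s * DIM('a) / norm e"
      by (simp add: mult.assoc)
  qed
  finally show ?thesis .
qed


lemma normalize_meas[measurable]: "(\<lambda>x::'a::euclidean_space. x /\<^sub>R norm x) \<in> borel_measurable borel"
  by measurable

lemma ball_vol: "emeasure lborel (ball (0::'a::euclidean_space) 1) = ennreal (unit_ball_vol DIM('a))"
  by (simp add: emeasure_ball)

lemma ubv_ne: "unit_ball_vol (real DIM('a::euclidean_space)) \<noteq> 0"
proof -
  have "unit_ball_vol (real DIM('a)) > 0" by (rule unit_ball_vol_pos) simp
  then show ?thesis by linarith
qed

lemma sets_unif_sphere[simp, measurable_cong]: "sets (unif_sphere :: 'a::euclidean_space measure) = sets borel"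
  unfolding unif_sphere_def by simp

lemma space_unif_sphere[simp]: "space (unif_sphere :: 'a::euclidean_space measure) = UNIV"
  unfolding unif_sphere_def by simp

lemma prob_unif_sphere: "prob_space (unif_sphere :: 'a::euclidean_space measure)"
  unfolding unif_sphere_def
proof (rule prob_space.prob_space_distr)
  show "prob_space (uniform_measure lborel (ball (0::'a) 1))"
    by (rule prob_space_uniform_measure) (simp_all add: ball_vol ubv_ne)
  show "(\<lambda>x::'a. x /\<^sub>R norm x) \<in> measurable (uniform_measure lborel (ball 0 1)) borel"
    by simp
qed

definition Cd :: "'a::euclidean_space itself \<Rightarrow> real" where
  "Cd _ = 2 ^ DIM('a) * DIM('a) / unit_ball_vol DIM('a)"

lemma Cd_pos: "Cd TYPE('a::euclidean_space) > 0"
  unfolding Cd_def by simp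

lemma unif_sphere_bound:
  fixes e :: "'a::euclidean_space" assumes "e \<noteq> 0" "t \<ge> 0"
  shows "emeasure (unif_sphere :: 'a measure) {a. \<bar>inner a e\<bar> < t * norm e} \<le> ennreal (Cd TYPE('a) * t)"
proof -
  define U where "U = uniform_measure lborel (ball (0::'a) 1)"
  define E where "E = (\<lambda>x::'a. x /\<^sub>R norm x) -` {a. \<bar>inner a e\<bar> < t * norm e}"
  have Ameas: "{a::'a. \<bar>inner a e\<bar> < t*norm e} \<in> sets borel" by measurable
  have Emeas: "E \<in> sets lborel" using measurable_sets[OF normalize_meas Ameas] unfolding E_def by simp
  have "emeasure (unif_sphere :: 'a measure) {a. \<bar>inner a e\<bar> < t * norm e}
      = emeasure U ((\<lambda>x::'a. x /\<^sub>R norm x) -` {a. \<bar>inner a e\<bar> < t * norm e} \<inter> space U)"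
    unfolding unif_sphere_def U_def by (subst emeasure_distr) auto
  also have "\<dots> = emeasure lborel (ball 0 1 \<inter> E) / emeasure lborel (ball (0::'a) 1)"
    unfolding U_def E_def[symmetric] using Emeas by (simp add: E_def)
  also have "\<dots> \<le> emeasure lborel {x::'a. norm x < 1 \<and> \<bar>inner x e\<bar> < t * norm e} / emeasure lborel (ball (0::'a) 1)"
  proof (intro divide_right_mono_ennreal emeasure_mono)
    show "ball 0 1 \<inter> E \<subseteq> {x::'a. norm x < 1 \<and> \<bar>inner x e\<bar> < t * norm e}"
    proof safe
      fix x assume x: "x \<in> ball (0::'a) 1" "x \<in> E"
      then show "norm x < 1" by simp
      show "\<bar>inner x e\<bar> < t * norm e"
      proof (cases "x = 0")
        case True then show ?thesis using x by (simp add: E_def)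
      next
        case False
        then have nx: "norm x > 0" by simp
        have "\<bar>inner x e\<bar> = norm x * \<bar>inner (x /\<^sub>R norm x) e\<bar>"
          using nx by (simp add: abs_mult)
        also have "\<dots> \<le> 1 * \<bar>inner (x /\<^sub>R norm x) e\<bar>" using x(1)
          by (intro mult_right_mono) auto
        also have "\<dots> < t * norm e" using x(2) by (simp add: E_def)
        finally show ?thesis .
      qed
    qed
    show "{x::'a. norm x < 1 \<and> \<bar>inner x e\<bar> < t * norm e} \<in> sets lborel" by measurable
  qed
  also have "\<dots> \<le> ennreal (2 ^ DIM('a) * (t * norm e) * DIM('a) / norm e) / ennreal (unit_ball_vol DIM('a))"
    unfolding ball_vol using assms by (intro divide_right_mono_ennreal ball_slab) auto
  also have "\<dots> = ennreal (Cd TYPE('a) * t)"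
    using assms by (subst divide_ennreal) (auto simp: Cd_def field_simps)
  finally show ?thesis .
qed


definition Bn :: "nat \<Rightarrow> (nat \<Rightarrow> real) set" where
  "Bn n = {x \<in> space (lebesgue_n n). eucl_norm_n n x < 1}"

definition Nmap :: "nat \<Rightarrow> (nat \<Rightarrow> real) \<Rightarrow> (nat \<Rightarrow> real)" where
  "Nmap n x = restrict (\<lambda>i. x i / eucl_norm_n n x) {..<n}"

lemma eucl_norm_meas[measurable]: "eucl_norm_n n \<in> borel_measurable (lebesgue_n n)"
  unfolding eucl_norm_n_def lebesgue_n_def by measurable

lemma eucl_norm_meas'[measurable]: "eucl_norm_n n \<in> borel_measurable (PiM {..<n} (\<lambda>_. borel::real measure))"
  unfolding eucl_norm_n_def by measurable

lemma Bn_meas[measurable]: "Bn n \<in> sets (lebesgue_n n)"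
  unfolding Bn_def by measurable

lemma Nmap_meas: "Nmap n \<in> measurable (lebesgue_n n) (PiM {..<n} (\<lambda>_. borel::real measure))"
  unfolding Nmap_def
proof (rule measurable_restrict)
  fix i assume i: "i \<in> {..<n}"
  have c: "(\<lambda>x. x i) \<in> borel_measurable (lebesgue_n n)"
    using measurable_component_singleton[OF i, of "\<lambda>_. lborel::real measure"] by (simp add: lebesgue_n_def)
  show "(\<lambda>x. x i / eucl_norm_n n x) \<in> borel_measurable (lebesgue_n n)"
    by (intro borel_measurable_divide eucl_norm_meas c)
qed

lemma space_lebesgue_n: "space (lebesgue_n n) = PiE {..<n} (\<lambda>_. UNIV)"
  unfolding lebesgue_n_def by (simp add: space_PiM)

lemma Bn_sub_cube: "Bn n \<subseteq> PiE {..<n} (\<lambda>_. {-1..1})"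
proof
  fix x assume x: "x \<in> Bn n"
  then have "\<And>i. i < n \<Longrightarrow> \<bar>x i\<bar> \<le> 1" unfolding Bn_def
    using comp_le_eucl[of _ n x] by force
  then show "x \<in> PiE {..<n} (\<lambda>_. {-1..1})" using x unfolding Bn_def space_lebesgue_n
    by (auto simp: PiE_iff abs_le_iff)
qed

interpretation PL: product_sigma_finite "\<lambda>_::nat. lborel::real measure"
  by unfold_locales

lemma Bn_finite: "emeasure (lebesgue_n n) (Bn n) \<noteq> top"
proof -
  have "emeasure (lebesgue_n n) (Bn n) \<le> emeasure (lebesgue_n n) (PiE {..<n} (\<lambda>_. {-1..1}))"
    by (intro emeasure_mono Bn_sub_cube) (auto simp: lebesgue_n_def intro!: sets_PiM_I_finite)
  also have "\<dots> = (\<Prod>i<n. emeasure lborel {-1..1::real})"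
    unfolding lebesgue_n_def by (intro PL.emeasure_PiM) auto
  also have "\<dots> = ennreal (2 ^ n)" by (simp add: ennreal_power[symmetric])
  also have "\<dots> < top" by simp
  finally show ?thesis by simp
qed

lemma sqrt_half: "sqrt s * 2 \<le> 1 \<Longrightarrow> s < 1"
proof (rule ccontr)
  assume a: "sqrt s * 2 \<le> 1" "\<not> s < 1"
  then have "1 \<le> sqrt s" by simp
  then show False using a by linarith
qed

lemma Bn_pos: "emeasure (lebesgue_n n) (Bn n) \<noteq> 0"
proof -
  have "0 < ennreal (unit_ball_vol (real (card {..<n})) * (1/2) ^ card {..<n})"
  proof -
    have "unit_ball_vol (real (card {..<n})) * (1/2) ^ card {..<n} > 0"
      by (intro mult_pos_pos unit_ball_vol_pos) auto
    then show ?thesis by simp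
  qed
  also have "\<dots> = emeasure (PiM {..<n} (\<lambda>_. lborel::real measure))
             ({f. sqrt (\<Sum>i\<in>{..<n}. (f i)\<^sup>2) \<le> 1/2} \<inter> space (PiM {..<n} (\<lambda>_. lborel::real measure)))"
    by (subst emeasure_cball_aux) auto
  also have "\<dots> \<le> emeasure (lebesgue_n n) (Bn n)"
    unfolding lebesgue_n_def[symmetric]
    by (intro emeasure_mono Bn_meas) (auto simp: Bn_def eucl_norm_n_def intro: sqrt_half)
  finally show ?thesis by simp
qed

lemma sets_unif_sphere_n[measurable_cong]: "sets (unif_sphere_n n) = sets (PiM {..<n} (\<lambda>_. borel::real measure))"
  unfolding unif_sphere_n_def by simp

lemma space_unif_sphere_n: "space (unif_sphere_n n) = PiE {..<n} (\<lambda>_. UNIV)"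
  using sets_eq_imp_space_eq[OF sets_unif_sphere_n[of n]] by (simp add: space_PiM)

lemma prob_unif_sphere_n: "prob_space (unif_sphere_n n)"
  unfolding unif_sphere_n_def Bn_def[symmetric] Nmap_def[symmetric]
proof (rule prob_space.prob_space_distr)
  show "prob_space (uniform_measure (lebesgue_n n) (Bn n))"
    by (rule prob_space_uniform_measure) (simp_all add: Bn_pos Bn_finite)
  show "Nmap n \<in> measurable (uniform_measure (lebesgue_n n) (Bn n)) (PiM {..<n} (\<lambda>_. borel))"
  proof -
    have "sets (uniform_measure (lebesgue_n n) (Bn n)) = sets (lebesgue_n n)" by simp
    from measurable_cong_sets[OF this refl] show ?thesis using Nmap_meas by simp
  qed
qed

definition vn :: "nat \<Rightarrow> real" where "vn n = measure (lebesgue_n n) (Bn n)"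

lemma vn: "emeasure (lebesgue_n n) (Bn n) = ennreal (vn n)" "vn n > 0"
proof -
  show e: "emeasure (lebesgue_n n) (Bn n) = ennreal (vn n)"
    unfolding vn_def using Bn_finite by (simp add: emeasure_eq_ennreal_measure)
  show "vn n > 0" using Bn_pos e by (metis ennreal_0 measure_nonneg order_le_less vn_def)
qed

definition Cn :: "nat \<Rightarrow> real" where "Cn n = 2 ^ n * n / vn n"

lemma Cn_nonneg: "Cn n \<ge> 0" unfolding Cn_def using vn(2)[of n] by (intro divide_nonneg_pos) auto


lemma exists_big_comp_n:
  assumes "\<exists>i<n. w i \<noteq> 0"
  shows "\<exists>k<n. eucl_norm_n n w \<le> real n * \<bar>w k\<bar>"
proof (rule ccontr)
  assume H: "\<not> ?thesis"
  have n0: "n > 0" using assms by auto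
  have "\<bar>w k\<bar> < eucl_norm_n n w / real n" if k: "k < n" for k
  proof -
    have "\<not> eucl_norm_n n w \<le> real n * \<bar>w k\<bar>" using H k by blast
    then have "real n * \<bar>w k\<bar> < eucl_norm_n n w" by linarith
    then show ?thesis using n0 by (simp add: pos_less_divide_eq mult.commute)
  qed
  then have "(\<Sum>k<n. \<bar>w k\<bar>) < (\<Sum>k<n. eucl_norm_n n w / real n)"
    using assms by (intro sum_strict_mono) auto
  also have "\<dots> = eucl_norm_n n w" using n0 by simp
  finally show False using L2_set_le_sum_abs[of w "{..<n}"]
    by (simp add: eucl_norm_n_def L2_set_def)
qed

lemma unif_sphere_n_bound:
  assumes "t \<ge> 0"
  shows "emeasure (unif_sphere_n n) {b \<in> space (unif_sphere_n n). \<bar>\<Sum>i<n. b i * w i\<bar> < t * eucl_norm_n n w}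
     \<le> ennreal (Cn n * t)"
proof (cases "\<exists>i<n. w i \<noteq> 0")
  case False
  then have "eucl_norm_n n w = 0" by (simp add: eucl_norm_n_def)
  then show ?thesis by simp
next
  case True
  obtain k where k: "k < n" "eucl_norm_n n w \<le> real n * \<bar>w k\<bar>"
    using exists_big_comp_n[OF True] by blast
  have wk: "w k \<noteq> 0"
  proof
    assume "w k = 0"
    then have "eucl_norm_n n w \<le> 0" using k by simp
    moreover obtain i where "i < n" "w i \<noteq> 0" using True by blast
    moreover have "\<bar>w i\<bar> \<le> eucl_norm_n n w" using comp_le_eucl[OF \<open>i < n\<close>] .
    ultimately show False by simp
  qed
  have wpos: "eucl_norm_n n w > 0" using comp_le_eucl[OF k(1), of w] wk by linarith
  define A where "A = {b \<in> space (unif_sphere_n n). \<bar>\<Sum>i<n. b i * w i\<bar> < t * eucl_norm_n n w}"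
  have Ameas: "A \<in> sets (PiM {..<n} (\<lambda>_. borel::real measure))"
    unfolding A_def space_unif_sphere_n[symmetric] sets_unif_sphere_n[symmetric] by measurable
  define U where "U = uniform_measure (lebesgue_n n) (Bn n)"
  define E where "E = Nmap n -` A \<inter> space (lebesgue_n n)"
  have Emeas: "E \<in> sets (lebesgue_n n)" unfolding E_def
    using measurable_sets[OF Nmap_meas Ameas] .
  have "emeasure (unif_sphere_n n) A = emeasure U (Nmap n -` A \<inter> space U)"
  proof -
    have eq: "unif_sphere_n n = distr U (PiM {..<n} (\<lambda>_. borel)) (Nmap n)"
      unfolding unif_sphere_n_def U_def Bn_def Nmap_def by (rule refl)
    have sU: "sets U = sets (lebesgue_n n)" unfolding U_def by simp
    have Nm: "Nmap n \<in> measurable U (PiM {..<n} (\<lambda>_. borel))"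
      using Nmap_meas[of n] unfolding measurable_cong_sets[OF sU refl] .
    show ?thesis unfolding eq by (rule emeasure_distr[OF Nm Ameas])
  qed
  also have "\<dots> = emeasure (lebesgue_n n) (Bn n \<inter> E) / emeasure (lebesgue_n n) (Bn n)"
    unfolding U_def using Emeas by (simp add: E_def)
  also have "\<dots> \<le> emeasure (lebesgue_n n)
     {x \<in> space (PiM {..<n} (\<lambda>_. lborel::real measure)). (\<forall>i\<in>{..<n}. \<bar>x i\<bar> \<le> 1) \<and> \<bar>\<Sum>i\<in>{..<n}. w i * x i\<bar> < t * eucl_norm_n n w}
     / emeasure (lebesgue_n n) (Bn n)"
  proof (rule divide_right_mono_ennreal, rule emeasure_mono)
    show "{x \<in> space (PiM {..<n} (\<lambda>_. lborel::real measure)). (\<forall>i\<in>{..<n}. \<bar>x i\<bar> \<le> 1) \<and> \<bar>\<Sum>i\<in>{..<n}. w i * x i\<bar> < t * eucl_norm_n n w}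
       \<in> sets (lebesgue_n n)" unfolding lebesgue_n_def by measurable
    show "Bn n \<inter> E \<subseteq> {x \<in> space (PiM {..<n} (\<lambda>_. lborel::real measure)). (\<forall>i\<in>{..<n}. \<bar>x i\<bar> \<le> 1) \<and> \<bar>\<Sum>i\<in>{..<n}. w i * x i\<bar> < t * eucl_norm_n n w}"
    proof
      fix x assume "x \<in> Bn n \<inter> E"
      then have x: "x \<in> Bn n" "x \<in> E" by auto
      have 1: "x \<in> space (PiM {..<n} (\<lambda>_. lborel::real measure))"
        using x by (simp add: Bn_def lebesgue_n_def)
      have 2: "\<forall>i\<in>{..<n}. \<bar>x i\<bar> \<le> 1"
        using Bn_sub_cube x(1) by (force simp: PiE_iff)
      have xl: "eucl_norm_n n x < 1" using x(1) by (simp add: Bn_def)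
      have xa: "\<bar>\<Sum>i<n. Nmap n x i * w i\<bar> < t * eucl_norm_n n w" using x(2)
        by (simp add: E_def A_def)
      have 3: "\<bar>\<Sum>i\<in>{..<n}. w i * x i\<bar> < t * eucl_norm_n n w"
      proof (cases "eucl_norm_n n x = 0")
        case True
        have "x i = 0" if "i < n" for i using comp_le_eucl[OF that, of x] True by simp
        then have "(\<Sum>i\<in>{..<n}. w i * x i) = 0" by simp
        then show ?thesis using xa True by (simp add: Nmap_def)
      next
        case False
        have "eucl_norm_n n x \<ge> 0" by (simp add: eucl_norm_n_def sum_nonneg)
        then have nx: "eucl_norm_n n x > 0" using False by linarith
        have "(\<Sum>i<n. Nmap n x i * w i) = (\<Sum>i<n. w i * x i) / eucl_norm_n n x"
          by (simp add: Nmap_def sum_divide_distrib mult.commute)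
        then have "\<bar>\<Sum>i<n. w i * x i\<bar> = eucl_norm_n n x * \<bar>\<Sum>i<n. Nmap n x i * w i\<bar>"
          using nx by (simp add: abs_div)
        also have "\<dots> \<le> 1 * \<bar>\<Sum>i<n. Nmap n x i * w i\<bar>"
          using xl by (intro mult_right_mono) auto
        finally show ?thesis using xa by simp
      qed
      show "x \<in> {x \<in> space (PiM {..<n} (\<lambda>_. lborel::real measure)). (\<forall>i\<in>{..<n}. \<bar>x i\<bar> \<le> 1) \<and> \<bar>\<Sum>i\<in>{..<n}. w i * x i\<bar> < t * eucl_norm_n n w}"
        using 1 2 3 by blast
    qed
  qed
  also have "\<dots> \<le> ennreal (2 ^ card {..<n} * (t * eucl_norm_n n w) / \<bar>w k\<bar>) / ennreal (vn n)"
    unfolding vn(1) unfolding lebesgue_n_def using k wk assms wpos by (intro divide_right_mono_ennreal slab_PiM) auto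
  also have "\<dots> \<le> ennreal (2 ^ n * (t * n) ) / ennreal (vn n)"
  proof (intro divide_right_mono_ennreal ennreal_leI)
    have "t * eucl_norm_n n w / \<bar>w k\<bar> \<le> t * n"
      using k wk assms by (simp add: field_simps mult_left_mono)
    then have "2 ^ n * (t * eucl_norm_n n w / \<bar>w k\<bar>) \<le> 2 ^ n * (t * n)"
      by (intro mult_left_mono) auto
    then show "2 ^ card {..<n} * (t * eucl_norm_n n w) / \<bar>w k\<bar> \<le> 2 ^ n * (t * n)" by simp
  qed
  also have "\<dots> = ennreal (Cn n * t)"
    using assms vn(2) by (subst divide_ennreal) (auto simp: Cn_def field_simps)
  finally show ?thesis unfolding A_def .
qed


lemma l1_le_card_norm: "l1norm (x::real^'d) \<le> CARD('d) * norm x"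
proof -
  have "l1norm x \<le> (\<Sum>i\<in>(UNIV::'d set). norm x)"
    unfolding l1norm_def by (intro sum_mono component_le_norm_cart)
  then show ?thesis by simp
qed

lemma Sz_enum1:
  assumes "mset xs = pad z n X" "size X \<le> n"
    "sorted_list_of_multiset (image_mset (inner a) (pad z n X)) = map (inner a) xs"
  shows "Sz z n X a b = (\<Sum>i<n. b i * inner a (xs ! i))"
proof -
  have "length xs = n" using assms by (metis size_mset size_pad)
  then show ?thesis unfolding Sz_def assms(3) by (intro sum.cong) auto
qed

lemma index_fun:
  assumes "mset xs = mset xs0" "length xs = n"
  shows "\<exists>\<sigma>\<in>PiE {..<n} (\<lambda>_. {..<n}). \<forall>i<n. xs0 ! \<sigma> i = xs ! i"
proof -
  have l0: "length xs0 = n" using assms by (metis size_mset)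
  have ex: "\<exists>k. k < n \<and> xs0 ! k = xs ! i" if "i < n" for i
  proof -
    have "xs ! i \<in> set xs0" using assms that by (metis nth_mem set_mset_mset)
    then show ?thesis using l0 by (auto simp: in_set_conv_nth)
  qed
  define \<sigma> where "\<sigma> = restrict (\<lambda>i. SOME k. k < n \<and> xs0 ! k = xs ! i) {..<n}"
  have "\<sigma> i < n \<and> xs0 ! \<sigma> i = xs ! i" if "i < n" for i
    unfolding \<sigma>_def using that someI_ex[OF ex[OF that]] by auto
  then show ?thesis unfolding \<sigma>_def by (intro bexI[of _ \<sigma>]) (auto simp: \<sigma>_def)
qed

lemma pointwise_lower:
  fixes z a :: "real^'d"
  assumes sX: "size X \<le> n" "size X' \<le> n" and n1: "n \<ge> 1" and t: "t \<ge> 0"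
    and xs0: "mset xs0 = pad z n X" and ys0: "mset ys0 = pad z n X'"
    and W: "W1z z n X X' > 0"
    and Ga: "\<forall>i<n. \<forall>j<n. xs0!i - ys0!j \<noteq> 0 \<longrightarrow> t * norm (xs0!i - ys0!j) \<le> \<bar>inner a (xs0!i - ys0!j)\<bar>"
    and Gb: "\<forall>\<sigma>\<in>PiE {..<n} (\<lambda>_. {..<n}). \<forall>\<tau>\<in>PiE {..<n} (\<lambda>_. {..<n}).
       t * eucl_norm_n n (\<lambda>i. inner a (xs0!\<sigma> i - ys0!\<tau> i)) \<le> \<bar>\<Sum>i<n. b i * inner a (xs0!\<sigma> i - ys0!\<tau> i)\<bar>"
  shows "t * t * W1z z n X X' / (n * CARD('d)) \<le> \<bar>Sz z n X a b - Sz z n X' a b\<bar>"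
proof -
  define W where "W = W1z z n X X'"
  obtain xs where xs: "mset xs = pad z n X"
    "sorted_list_of_multiset (image_mset (inner a) (pad z n X)) = map (inner a) xs"
    using sort_enum by blast
  obtain ys where ys: "mset ys = pad z n X'"
    "sorted_list_of_multiset (image_mset (inner a) (pad z n X')) = map (inner a) ys"
    using sort_enum by blast
  have lxs: "length xs = n" "length ys = n" using xs(1) ys(1) sX by (metis size_mset size_pad)+
  obtain \<sigma> where \<sigma>: "\<sigma> \<in> PiE {..<n} (\<lambda>_. {..<n})" "\<forall>i<n. xs0 ! \<sigma> i = xs ! i"
    using index_fun[of xs xs0 n] xs(1) xs0 lxs by auto
  obtain \<tau> where \<tau>: "\<tau> \<in> PiE {..<n} (\<lambda>_. {..<n})" "\<forall>i<n. ys0 ! \<tau> i = ys ! i"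
    using index_fun[of ys ys0 n] ys(1) ys0 lxs by auto
  define v where "v = (\<lambda>i. inner a (xs0!\<sigma> i - ys0!\<tau> i))"
  have v: "v i = inner a (xs!i - ys!i)" if "i < n" for i
    using that \<sigma> \<tau> by (simp add: v_def)
  have Sdiff: "Sz z n X a b - Sz z n X' a b = (\<Sum>i<n. b i * v i)"
    using Sz_enum1[OF xs(1) sX(1) xs(2)] Sz_enum1[OF ys(1) sX(2) ys(2)]
    by (simp add: v sum_subtractf[symmetric] inner_diff_right right_diff_distrib)
  have Wle: "W \<le> (\<Sum>j<n. l1norm (xs ! j - ys ! j))"
    using W1_le[OF xs(1) ys(1)] lxs by (simp add: W_def W1z_def)
  obtain j where j: "j < n" "W / n \<le> l1norm (xs ! j - ys ! j)"
  proof (rule ccontr)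
    assume "\<not> thesis"
    then have "\<And>j. j < n \<Longrightarrow> l1norm (xs ! j - ys ! j) < W / n" using that by force
    then have "(\<Sum>j<n. l1norm (xs ! j - ys ! j)) < (\<Sum>j<n. W / n)"
      using n1 by (intro sum_strict_mono) (auto simp: lessThan_empty_iff)
    also have "\<dots> = W" using n1 by simp
    finally show False using Wle by simp
  qed
  have Wpos: "W > 0" using W by (simp add: W_def)
  have np: "real n > 0" using n1 by simp
  have dpos: "real CARD('d) > 0" by simp
  define e where "e = xs ! j - ys ! j"
  have eeq: "e = xs0 ! \<sigma> j - ys0 ! \<tau> j" using \<sigma> \<tau> j by (simp add: e_def)
  have "W / n > 0" using Wpos np by simp
  then have "e \<noteq> 0" using j(2) by (auto simp: e_def l1norm_def)
  then have ae: "t * norm e \<le> \<bar>inner a e\<bar>"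
    using Ga \<sigma>(1) \<tau>(1) j(1) unfolding eeq by (auto simp: PiE_iff)
  have "W / n \<le> CARD('d) * norm e" using j(2) l1_le_card_norm[of e] by (simp add: e_def)
  then have "W / n \<le> norm e * CARD('d)" by (simp add: mult.commute)
  then have "W / n / CARD('d) \<le> norm e" by (rule pos_divide_le_eq[OF dpos, THEN iffD2])
  then have "W / (n * CARD('d)) \<le> norm e" by (simp add: divide_divide_eq_left)
  then have "t * (W / (n * CARD('d))) \<le> t * norm e" using t by (rule mult_left_mono)
  also have "\<dots> \<le> \<bar>v j\<bar>" using ae v[OF j(1)] by (simp add: e_def)
  also have "\<dots> \<le> eucl_norm_n n v" by (rule comp_le_eucl[OF j(1)])
  finally have "t * (t * (W / (n * CARD('d)))) \<le> t * eucl_norm_n n v" using t by (rule mult_left_mono)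
  also have "\<dots> \<le> \<bar>\<Sum>i<n. b i * v i\<bar>" using Gb \<sigma>(1) \<tau>(1) unfolding v_def by blast
  finally show ?thesis unfolding Sdiff W_def[symmetric] by (simp add: field_simps)
qed


lemma Bb_meas:
  fixes c :: "nat \<Rightarrow> real^'d"
  shows "{w \<in> space (unif_sphere \<Otimes>\<^sub>M unif_sphere_n n).
     \<bar>\<Sum>i<n. snd w i * inner (fst w) (c i)\<bar> < t * eucl_norm_n n (\<lambda>i. inner (fst w) (c i))}
     \<in> sets (unif_sphere \<Otimes>\<^sub>M unif_sphere_n n)"
  unfolding eucl_norm_n_def by measurable

definition tL :: "nat \<Rightarrow> 'd::finite itself \<Rightarrow> real" where
  "tL n _ = 1 / (2 * (real n ^ 2 * Cd TYPE(real^'d) + (real n ^ n)^2 * Cn n) + 2)"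

definition cL :: "nat \<Rightarrow> 'd::finite itself \<Rightarrow> real" where
  "cL n T = tL n T * tL n T / (n * CARD('d)) / 2"

lemma tL_facts:
  "tL n TYPE('d::finite) > 0"
  "(real n ^ 2 * Cd TYPE(real^'d) + (real n ^ n)^2 * Cn n) * tL n TYPE('d) \<le> 1/2"
proof -
  define K where "K = real n ^ 2 * Cd TYPE(real^'d) + (real n ^ n)^2 * Cn n"
  have K: "K \<ge> 0" unfolding K_def using Cd_pos[where 'a="real^'d"] Cn_nonneg[of n]
    by (intro add_nonneg_nonneg mult_nonneg_nonneg) auto
  have t: "tL n TYPE('d) = 1 / (2 * K + 2)" unfolding tL_def K_def by simp
  show "tL n TYPE('d) > 0" unfolding t using K by simp
  show "(real n ^ 2 * Cd TYPE(real^'d) + (real n ^ n)^2 * Cn n) * tL n TYPE('d) \<le> 1/2"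
    unfolding K_def[symmetric] t using K by (simp add: field_simps)
qed

lemma cL_pos: "n \<ge> 1 \<Longrightarrow> cL n TYPE('d::finite) > 0"
  unfolding cL_def using tL_facts(1)[of n, where 'd='d] by simp

lemma lower_part:
  fixes z :: "real^'d" and \<Omega> :: "(real^'d) set"
  assumes n1: "n \<ge> 1" and p1: "p \<ge> 1"
    and X: "X \<in> multisets_le n \<Omega>" and X': "X' \<in> multisets_le n \<Omega>" and Wp: "W1z z n X X' > 0"
  shows "ennreal (cL n TYPE('d) powr p) \<le>
     (\<integral>\<^sup>+ w. ennreal ((\<bar>Sz z n X (fst w) (snd w) - Sz z n X' (fst w) (snd w)\<bar>
                                      / W1z z n X X') powr p)
                   \<partial>(unif_sphere \<Otimes>\<^sub>M unif_sphere_n n))"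
proof -
  define A where "A = (unif_sphere :: (real^'d) measure)"
  define B where "B = unif_sphere_n n"
  define M where "M = A \<Otimes>\<^sub>M B"
  interpret A: prob_space A unfolding A_def by (rule prob_unif_sphere)
  interpret B: prob_space B unfolding B_def by (rule prob_unif_sphere_n)
  interpret AB: pair_prob_space A B ..
  define t where "t = tL n TYPE('d)"
  have tpos: "t > 0" unfolding t_def by (rule tL_facts(1))
  have tK: "(real n ^ 2 * Cd TYPE(real^'d) + (real n ^ n)^2 * Cn n) * t \<le> 1/2"
    unfolding t_def by (rule tL_facts(2))
  define W where "W = W1z z n X X'"
  have sX: "size X \<le> n" "size X' \<le> n" using X X' by (auto simp: multisets_le_def)
  obtain xs0 where xs0: "mset xs0 = pad z n X" by (metis ex_mset)
  obtain ys0 where ys0: "mset ys0 = pad z n X'" by (metis ex_mset)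
  define e where "e = (\<lambda>(i::nat,j::nat). xs0!i - ys0!j)"
  define Ia where "Ia = {(i,j). i < n \<and> j < n \<and> e (i,j) \<noteq> 0}"
  define F where "F = PiE {..<n} (\<lambda>_. {..<n})"
  define cc where "cc = (\<lambda>(\<sigma>::nat\<Rightarrow>nat,\<tau>::nat\<Rightarrow>nat) i. xs0!\<sigma> i - ys0!\<tau> i)"
  define Ba where "Ba = (\<lambda>k. {a. \<bar>inner a (e k)\<bar> < t * norm (e k)} \<times> space B)"
  define Bb where "Bb = (\<lambda>k. {w \<in> space M.
     \<bar>\<Sum>i<n. snd w i * inner (fst w) (cc k i)\<bar> < t * eucl_norm_n n (\<lambda>i. inner (fst w) (cc k i))})"
  define Bad where "Bad = (\<Union>k\<in>Ia. Ba k) \<union> (\<Union>k\<in>F\<times>F. Bb k)"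
  define G where "G = space M - Bad"
  have finIa: "finite Ia" unfolding Ia_def
    by (rule finite_subset[of _ "{..<n} \<times> {..<n}"]) auto
  have cardIa: "card Ia \<le> n * n" unfolding Ia_def
    using card_mono[of "{..<n} \<times> {..<n}" "{(i,j). i < n \<and> j < n \<and> e (i,j) \<noteq> 0}"]
    by (auto simp: card_cartesian_product)
  have finF: "finite (F \<times> F)" unfolding F_def by (auto intro!: finite_PiE)
  have cardF: "card (F \<times> F) = n ^ n * n ^ n" unfolding F_def
    by (simp add: card_cartesian_product card_PiE)
  have spM: "space M = space A \<times> space B" unfolding M_def by (simp add: space_pair_measure)
  have Ba_meas: "Ba k \<in> sets M" for k
    unfolding Ba_def M_def A_def by (intro pair_measureI) auto
  have Bb_meas': "Bb k \<in> sets M" for k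
    unfolding Bb_def M_def A_def B_def by (rule Bb_meas)
  have Bad_meas: "Bad \<in> sets M" unfolding Bad_def
    by (intro sets.Un sets.finite_UN finIa finF Ba_meas Bb_meas')
  have Bad_sub: "Bad \<subseteq> space M" unfolding Bad_def Ba_def Bb_def spM A_def by auto
  have G_meas: "G \<in> sets M" unfolding G_def using Bad_meas by auto
  have mBa: "emeasure M (Ba k) \<le> ennreal (Cd TYPE(real^'d) * t)" if "k \<in> Ia" for k
  proof -
    have ek: "e k \<noteq> 0" using that by (auto simp: Ia_def)
    have "emeasure M (Ba k) = emeasure A {a. \<bar>inner a (e k)\<bar> < t * norm (e k)} * emeasure B (space B)"
      unfolding M_def Ba_def A_def by (intro B.emeasure_pair_measure_Times) auto
    also have "\<dots> = emeasure A {a. \<bar>inner a (e k)\<bar> < t * norm (e k)}" by (simp add: B.emeasure_space_1)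
    also have "\<dots> \<le> ennreal (Cd TYPE(real^'d) * t)"
      unfolding A_def using ek tpos by (intro unif_sphere_bound) auto
    finally show ?thesis .
  qed
  have mBb: "emeasure M (Bb k) \<le> ennreal (Cn n * t)" for k
  proof -
    have "emeasure M (Bb k) = (\<integral>\<^sup>+a. emeasure B (Pair a -` Bb k) \<partial>A)"
      unfolding M_def using Bb_meas'[of k] unfolding M_def by (rule B.emeasure_pair_measure_alt)
    also have "\<dots> \<le> (\<integral>\<^sup>+a. ennreal (Cn n * t) \<partial>A)"
    proof (intro nn_integral_mono)
      fix a assume a: "a \<in> space A"
      have "Pair a -` Bb k = {b \<in> space B. \<bar>\<Sum>i<n. b i * (\<lambda>i. inner a (cc k i)) i\<bar> < t * eucl_norm_n n (\<lambda>i. inner a (cc k i))}"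
        unfolding Bb_def spM using a by auto
      also have "emeasure B \<dots> \<le> ennreal (Cn n * t)"
        unfolding B_def using tpos by (intro unif_sphere_n_bound) auto
      finally show "emeasure B (Pair a -` Bb k) \<le> ennreal (Cn n * t)" .
    qed
    also have "\<dots> = ennreal (Cn n * t)" by (simp add: A.emeasure_space_1)
    finally show ?thesis .
  qed
  have "emeasure M Bad \<le> emeasure M (\<Union>k\<in>Ia. Ba k) + emeasure M (\<Union>k\<in>F\<times>F. Bb k)"
    unfolding Bad_def using Ba_meas Bb_meas' finIa finF by (intro emeasure_subadditive) auto
  also have "\<dots> \<le> (\<Sum>k\<in>Ia. emeasure M (Ba k)) + (\<Sum>k\<in>F\<times>F. emeasure M (Bb k))"
    using Ba_meas Bb_meas' finIa finF by (intro add_mono emeasure_subadditive_finite) auto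
  also have "\<dots> \<le> (\<Sum>k\<in>Ia. ennreal (Cd TYPE(real^'d) * t)) + (\<Sum>k\<in>F\<times>F. ennreal (Cn n * t))"
    using mBa mBb by (intro add_mono sum_mono) auto
  also have "\<dots> = ennreal (card Ia * (Cd TYPE(real^'d) * t) + card (F\<times>F) * (Cn n * t))"
  proof -
    have c1: "Cd TYPE(real^'d) * t \<ge> 0" using Cd_pos[where 'a="real^'d"] tpos by simp
    have c2: "Cn n * t \<ge> 0" using Cn_nonneg[of n] tpos by simp
    have "(\<Sum>k\<in>Ia. ennreal (Cd TYPE(real^'d) * t)) = ennreal (\<Sum>k\<in>Ia. Cd TYPE(real^'d) * t)"
      using c1 by (rule sum_ennreal)
    moreover have "(\<Sum>k\<in>F\<times>F. ennreal (Cn n * t)) = ennreal (\<Sum>k\<in>F\<times>F. Cn n * t)"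
      using c2 by (rule sum_ennreal)
    ultimately show ?thesis using c1 c2
      by (simp only: sum_constant ennreal_plus[symmetric] mult_nonneg_nonneg of_nat_0_le_iff)
  qed
  also have "\<dots> \<le> ennreal ((real n ^ 2 * Cd TYPE(real^'d) + (real n ^ n)^2 * Cn n) * t)"
  proof (intro ennreal_leI)
    have "real (card Ia) \<le> real n ^ 2" using cardIa by (simp add: power2_eq_square flip: of_nat_mult)
    then have "card Ia * (Cd TYPE(real^'d) * t) \<le> real n ^ 2 * (Cd TYPE(real^'d) * t)"
      using Cd_pos[where 'a="real^'d"] tpos by (intro mult_right_mono) auto
    moreover have "real (card (F\<times>F)) = (real n ^ n)^2" unfolding cardF by (simp add: power2_eq_square)
    ultimately show "card Ia * (Cd TYPE(real^'d) * t) + card (F\<times>F) * (Cn n * t)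
        \<le> (real n ^ 2 * Cd TYPE(real^'d) + (real n ^ n)^2 * Cn n) * t"
      by (simp add: algebra_simps)
  qed
  also have "\<dots> \<le> ennreal (1/2)" using tK by (intro ennreal_leI)
  finally have mBad: "emeasure M Bad \<le> ennreal (1/2)" .
  have mG: "emeasure M G \<ge> ennreal (1/2)"
  proof -
    have "emeasure M G = emeasure M (space M) - emeasure M Bad"
      unfolding G_def using Bad_meas Bad_sub neq_top_trans[OF ennreal_neq_top mBad] by (intro emeasure_Diff) auto
    also have "emeasure M (space M) = 1" unfolding M_def by (rule AB.emeasure_space_1)
    finally have "emeasure M G = ennreal 1 - emeasure M Bad" by simp
    moreover have "ennreal 1 - ennreal (1/2) \<le> ennreal 1 - emeasure M Bad"
      using mBad by (intro ennreal_minus_mono) auto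
    moreover have "ennreal 1 - ennreal (1/2) = ennreal (1/2)" by (subst ennreal_minus) auto
    ultimately show ?thesis by simp
  qed
  define t0 where "t0 = t * t / (n * CARD('d))"
  have t0pos: "t0 > 0" unfolding t0_def using tpos n1 by simp
  have pw: "t0 \<le> \<bar>Sz z n X (fst w) (snd w) - Sz z n X' (fst w) (snd w)\<bar> / W" if w: "w \<in> G" for w
  proof -
    obtain a b where ab: "w = (a,b)" by (cases w)
    have wM: "w \<in> space M" and wB: "w \<notin> Bad" using w by (auto simp: G_def)
    have bB: "b \<in> space B" using wM ab spM by auto
    have Ga: "\<forall>i<n. \<forall>j<n. xs0!i - ys0!j \<noteq> 0 \<longrightarrow> t * norm (xs0!i - ys0!j) \<le> \<bar>inner a (xs0!i - ys0!j)\<bar>"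
    proof (intro allI impI)
      fix i j assume ij: "i < n" "j < n" "xs0!i - ys0!j \<noteq> 0"
      then have "(i,j) \<in> Ia" by (simp add: Ia_def e_def)
      then have "w \<notin> Ba (i,j)" using wB by (auto simp: Bad_def)
      then show "t * norm (xs0!i - ys0!j) \<le> \<bar>inner a (xs0!i - ys0!j)\<bar>"
        using bB by (auto simp: Ba_def ab e_def)
    qed
    have Gb: "\<forall>\<sigma>\<in>PiE {..<n} (\<lambda>_. {..<n}). \<forall>\<tau>\<in>PiE {..<n} (\<lambda>_. {..<n}).
       t * eucl_norm_n n (\<lambda>i. inner a (xs0!\<sigma> i - ys0!\<tau> i)) \<le> \<bar>\<Sum>i<n. b i * inner a (xs0!\<sigma> i - ys0!\<tau> i)\<bar>"
    proof (intro ballI)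
      fix \<sigma> \<tau> assume "\<sigma> \<in> PiE {..<n} (\<lambda>_. {..<n})" "\<tau> \<in> PiE {..<n} (\<lambda>_. {..<n})"
      then have "(\<sigma>,\<tau>) \<in> F \<times> F" by (simp add: F_def)
      then have "w \<notin> Bb (\<sigma>,\<tau>)" using wB by (auto simp: Bad_def)
      then show "t * eucl_norm_n n (\<lambda>i. inner a (xs0!\<sigma> i - ys0!\<tau> i)) \<le> \<bar>\<Sum>i<n. b i * inner a (xs0!\<sigma> i - ys0!\<tau> i)\<bar>"
        using wM by (auto simp: Bb_def ab cc_def)
    qed
    have "t * t * W / (n * CARD('d)) \<le> \<bar>Sz z n X a b - Sz z n X' a b\<bar>"
      unfolding W_def using pointwise_lower[OF sX n1 _ xs0 ys0 Wp Ga Gb] tpos by simp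
    then have "t0 * W \<le> \<bar>Sz z n X a b - Sz z n X' a b\<bar>" by (simp add: t0_def)
    then show ?thesis using Wp ab by (simp add: W_def pos_le_divide_eq)
  qed
  have "ennreal (t0 powr p) * ennreal (1/2) \<le> ennreal (t0 powr p) * emeasure M G"
    using mG by (intro mult_left_mono) auto
  also have "\<dots> = (\<integral>\<^sup>+ w. ennreal (t0 powr p) * indicator G w \<partial>M)"
    using G_meas by (rule nn_integral_cmult_indicator[symmetric])
  also have "\<dots> \<le> (\<integral>\<^sup>+ w. ennreal ((\<bar>Sz z n X (fst w) (snd w) - Sz z n X' (fst w) (snd w)\<bar> / W) powr p) \<partial>M)"
  proof (intro nn_integral_mono)
    fix w assume "w \<in> space M"
    show "ennreal (t0 powr p) * indicator G w \<le> ennreal ((\<bar>Sz z n X (fst w) (snd w) - Sz z n X' (fst w) (snd w)\<bar> / W) powr p)"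
    proof (cases "w \<in> G")
      case True
      have "t0 powr p \<le> (\<bar>Sz z n X (fst w) (snd w) - Sz z n X' (fst w) (snd w)\<bar> / W) powr p"
        using pw[OF True] t0pos p1 by (intro powr_mono2) auto
      then show ?thesis using True by (simp add: ennreal_leI)
    qed simp
  qed
  finally have I: "ennreal (t0 powr p) * ennreal (1/2) \<le> (\<integral>\<^sup>+ w. ennreal ((\<bar>Sz z n X (fst w) (snd w) - Sz z n X' (fst w) (snd w)\<bar> / W) powr p) \<partial>M)" .
  have c: "cL n TYPE('d) = t0 / 2" unfolding cL_def t0_def t_def by simp
  have "cL n TYPE('d) powr p = t0 powr p / 2 powr p" unfolding c
    by (rule powr_divide)
  also have "\<dots> \<le> t0 powr p / 2"
  proof -
    have "2 powr 1 \<le> 2 powr p" using p1 by (intro powr_mono) auto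
    then have "2 \<le> 2 powr p" by simp
    then show ?thesis using t0pos by (intro divide_left_mono) auto
  qed
  finally have h: "cL n TYPE('d) powr p \<le> t0 powr p / 2" .
  have "ennreal (cL n TYPE('d) powr p) \<le> ennreal (t0 powr p * (1/2))"
    using h by (intro ennreal_leI) simp
  also have "\<dots> = ennreal (t0 powr p) * ennreal (1/2)" by (rule ennreal_mult) auto
  also note I
  finally show ?thesis unfolding M_def A_def B_def W_def .
qed


theorem mainTheorem4:
  fixes n :: nat and p :: real and \<Omega> :: "(real ^ 'd) set" and z :: "real ^ 'd"
  assumes "n \<ge> 1" and "p \<ge> 1" and "compact \<Omega>" and "z \<notin> \<Omega>"
  shows "(\<exists>L. \<forall>a \<in> sphere 0 1. \<forall>b \<in> sphere_n n.
            \<forall>X \<in> multisets_le n \<Omega>. \<forall>X' \<in> multisets_le n \<Omega>.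
              \<bar>Sz z n X a b - Sz z n X' a b\<bar> \<le> L * W1z z n X X')
       \<and> (\<exists>c > 0. \<forall>X \<in> multisets_le n \<Omega>. \<forall>X' \<in> multisets_le n \<Omega>.
              W1z z n X X' > 0 \<longrightarrow>
              ennreal (c powr p) \<le>
                (\<integral>\<^sup>+ w. ennreal ((\<bar>Sz z n X (fst w) (snd w) - Sz z n X' (fst w) (snd w)\<bar>
                                      / W1z z n X X') powr p)
                   \<partial>(unif_sphere \<Otimes>\<^sub>M unif_sphere_n n)))"
proof (intro conjI)
  show "\<exists>L. \<forall>a \<in> sphere 0 1. \<forall>b \<in> sphere_n n.
            \<forall>X \<in> multisets_le n \<Omega>. \<forall>X' \<in> multisets_le n \<Omega>.
              \<bar>Sz z n X a b - Sz z n X' a b\<bar> \<le> L * W1z z n X X'"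
    by (intro exI[of _ 1] ballI upper_part)
  show "\<exists>c > 0. \<forall>X \<in> multisets_le n \<Omega>. \<forall>X' \<in> multisets_le n \<Omega>.
              W1z z n X X' > 0 \<longrightarrow>
              ennreal (c powr p) \<le>
                (\<integral>\<^sup>+ w. ennreal ((\<bar>Sz z n X (fst w) (snd w) - Sz z n X' (fst w) (snd w)\<bar>
                                      / W1z z n X X') powr p)
                   \<partial>(unif_sphere \<Otimes>\<^sub>M unif_sphere_n n))"
    using assms(1,2) by (intro exI[of _ "cL n TYPE('d)"] conjI cL_pos ballI impI lower_part)
qed

end
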